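(* Let $\Omega\subsetneq\mathbb{S}^m$ be a domain and $\rho\in C^1(\Omega)$ such that the metric $g=e^{2\rho}g_0$ is a complete Riemannian metric on $\Omega$ and $\sigma=e^{-\rho}$ is the restriction to $\Omega$ of a continuous function defined on $\overline{\Omega}$. Then the associated map $\phi:\Omega\to\mathbb{H}^{m+1}$ is proper.
   Context: $\mathbb{S}^m\subset\mathbb{R}^{m+1}$ is the unit sphere with round metric $g_0$; $\nabla$ and $|\cdot|$ denote gradient and norm with respect to $g_0$. Let $\mathbb{L}^{m+2}$ be $\mathbb{R}^{m+2}$ with $\langle\!\langle x,y\rangle\!\rangle=-x_0y_0+\sum_{i=1}^{m+1}x_iy_i$, and $\mathbb{H}^{m+1}=\{x:\langle\!\langle x,x\rangle\!\rangle=-1,\ x_0>0\}$. For $\rho\in C^1(\Omega)$ the associated map $\phi=\phi^\rho:\Omega\to\mathbb{H}^{m+1}$ is $$\phi(x)=\frac{e^{\rho(x)}}{2}\Big(1+e^{-2\rho(x)}\big(1+|\nabla\rho(x)|^2\big)\Big)(1,x)+e^{-\rho(x)}\big(0,-x+\nabla\rho(x)\big).$$ Proper means preimages of compact sets are compact. *)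

theory Defs
  imports "HOL-Analysis.Analysis"
begin

text \<open>The unit sphere S^m is modelled as sphere 0 1 in a Euclidean space 'a
  of dimension m+1; Lorentz space L^{m+2} is modelled as real \<times> 'a,
  with first component x_0.\<close>

definition lorentz :: "real \<times> 'a::euclidean_space \<Rightarrow> real \<times> 'a \<Rightarrow> real" where
  "lorentz x y = - fst x * fst y + snd x \<bullet> snd y"

definition hyperbolic_space :: "(real \<times> 'a::euclidean_space) set" where
  "hyperbolic_space = {x. lorentz x x = -1 \<and> fst x > 0}"

definition sgrad :: "'a::euclidean_space set \<Rightarrow> ('a \<Rightarrow> real) \<Rightarrow> 'a \<Rightarrow> 'a" where
  "sgrad \<Omega> \<rho> x = (SOME v. v \<bullet> x = 0 \<and> (\<rho> has_derivative (\<lambda>h. v \<bullet> h)) (at x within \<Omega>))"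

definition sphere_C1 :: "'a::euclidean_space set \<Rightarrow> ('a \<Rightarrow> real) \<Rightarrow> bool" where
  "sphere_C1 \<Omega> \<rho> \<longleftrightarrow>
     (\<forall>x\<in>\<Omega>. \<exists>v. v \<bullet> x = 0 \<and> (\<rho> has_derivative (\<lambda>h. v \<bullet> h)) (at x within \<Omega>))
     \<and> continuous_on \<Omega> (sgrad \<Omega> \<rho>)"

definition conf_length :: "('a::euclidean_space \<Rightarrow> real) \<Rightarrow> (real \<Rightarrow> 'a) \<Rightarrow> real" where
  "conf_length \<rho> \<gamma> = integral {0..1} (\<lambda>t. exp (\<rho> (\<gamma> t)) * norm (vector_derivative \<gamma> (at t)))"

definition conf_dist :: "'a::euclidean_space set \<Rightarrow> ('a \<Rightarrow> real) \<Rightarrow> 'a \<Rightarrow> 'a \<Rightarrow> real" where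
  "conf_dist \<Omega> \<rho> x y = Inf {conf_length \<rho> \<gamma> | \<gamma>. valid_path \<gamma> \<and> path_image \<gamma> \<subseteq> \<Omega>
                                \<and> pathstart \<gamma> = x \<and> pathfinish \<gamma> = y}"

text \<open>Completeness of (Omega, g): every Cauchy sequence for the Riemannian distance
  converges to a point of Omega (the topology of g is the subspace topology).\<close>

definition conf_complete :: "'a::euclidean_space set \<Rightarrow> ('a \<Rightarrow> real) \<Rightarrow> bool" where
  "conf_complete \<Omega> \<rho> \<longleftrightarrow>
     (\<forall>X. (\<forall>n. X n \<in> \<Omega>) \<and> (\<forall>e>0. \<exists>N. \<forall>m\<ge>N. \<forall>n\<ge>N. conf_dist \<Omega> \<rho> (X m) (X n) < e)
          \<longrightarrow> (\<exists>x\<in>\<Omega>. X \<longlonglongrightarrow> x))"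

definition assoc_map :: "'a::euclidean_space set \<Rightarrow> ('a \<Rightarrow> real) \<Rightarrow> 'a \<Rightarrow> real \<times> 'a" where
  "assoc_map \<Omega> \<rho> x =
     (let c = exp (\<rho> x) / 2 * (1 + exp (-2 * \<rho> x) * (1 + (norm (sgrad \<Omega> \<rho> x))\<^sup>2))
      in (c, c *\<^sub>R x + exp (- \<rho> x) *\<^sub>R (sgrad \<Omega> \<rho> x - x)))"

end

theory Submission
  imports Defs
begin

lemma chord:
  fixes a b :: "'a::euclidean_space"
  assumes nz: "\<forall>t\<in>{0..1}. norm (a + t *\<^sub>R (b - a)) \<ge> 1/2"
  shows "valid_path (\<lambda>t. inverse (norm (a + t *\<^sub>R (b - a))) *\<^sub>R (a + t *\<^sub>R (b - a)))"
    "\<forall>t\<in>{0..1}. norm (vector_derivative (\<lambda>t. inverse (norm (a + t *\<^sub>R (b - a))) *\<^sub>R (a + t *\<^sub>R (b - a))) (at t)) \<le> 4 * norm (b - a)"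
proof -
  define u where "u = (\<lambda>t::real. a + t *\<^sub>R (b - a))"
  define D where "D = (\<lambda>t. inverse (norm (u t)) *\<^sub>R (b - a) + (- (inverse (norm (u t)))\<^sup>2 * ((u t /\<^sub>R norm (u t)) \<bullet> (b - a))) *\<^sub>R u t)"
  have der: "((\<lambda>t. inverse (norm (u t)) *\<^sub>R u t) has_vector_derivative D t) (at t)" if "u t \<noteq> 0" for t
  proof -
    have du: "(u has_vector_derivative (b - a)) (at t)"
      unfolding u_def by (auto intro!: derivative_eq_intros)
    have "((\<lambda>t. norm (u t)) has_derivative (\<lambda>h. sgn (u t) \<bullet> (h *\<^sub>R (b - a)))) (at t)"
      using has_derivative_compose[OF du[unfolded has_vector_derivative_def] has_derivative_norm[OF that]] by (simp add: o_def inner_commute)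
    then have dn: "((\<lambda>t. norm (u t)) has_real_derivative (sgn (u t) \<bullet> (b - a))) (at t)"
      by (simp add: has_field_derivative_def mult.commute[of _ "sgn (u t) \<bullet> (b - a)"])
    have di: "((\<lambda>t. inverse (norm (u t))) has_real_derivative (- (inverse (norm (u t)))\<^sup>2 * (sgn (u t) \<bullet> (b - a)))) (at t)"
      using DERIV_inverse_fun[OF dn] that by (simp add: power2_eq_square field_simps)
    show ?thesis
      using has_vector_derivative_scaleR[OF di du] by (simp add: D_def sgn_div_norm algebra_simps)
  qed
  have unz: "u t \<noteq> 0" if "t \<in> {0..1}" for t using nz that unfolding u_def by fastforce
  have cD: "continuous_on {0..1} D"
    unfolding D_def u_def using unz[unfolded u_def]
    by (intro continuous_intros) auto
  have "(\<lambda>t. inverse (norm (u t)) *\<^sub>R u t) C1_differentiable_on {0..1}"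
    unfolding C1_differentiable_on_def using der unz cD by blast
  then show "valid_path (\<lambda>t. inverse (norm (a + t *\<^sub>R (b - a))) *\<^sub>R (a + t *\<^sub>R (b - a)))"
    unfolding valid_path_def u_def by (rule C1_differentiable_imp_piecewise)
  show "\<forall>t\<in>{0..1}. norm (vector_derivative (\<lambda>t. inverse (norm (a + t *\<^sub>R (b - a))) *\<^sub>R (a + t *\<^sub>R (b - a))) (at t)) \<le> 4 * norm (b - a)"
  proof
    fix t :: real assume t: "t \<in> {0..1}"
    have n2: "norm (u t) \<ge> 1/2" using nz t unfolding u_def by auto
    have vd: "vector_derivative (\<lambda>t. inverse (norm (u t)) *\<^sub>R u t) (at t) = D t"
      using der[OF unz[OF t]] by (rule vector_derivative_at)
    have "norm (D t) \<le> norm (b - a) / norm (u t) + (inverse (norm (u t)))\<^sup>2 * (norm (u t /\<^sub>R norm (u t)) * norm (b - a)) * norm (u t)"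
      unfolding D_def
      apply (rule order_trans[OF norm_triangle_ineq])
      apply (rule add_mono)
       apply (simp add: divide_inverse mult.commute)
      apply (simp add: abs_mult)
      apply (simp add: mult.assoc)
      apply (intro mult_left_mono) apply auto
      using mult_right_mono[OF Cauchy_Schwarz_ineq2[of "u t" "b - a"] norm_ge_zero[of "u t"]]
      apply (simp add: ac_simps)
      done
    also have "\<dots> = 2 * norm (b - a) / norm (u t)"
      using n2 by (simp add: power2_eq_square field_simps)
    also have "\<dots> \<le> 4 * norm (b - a)"
    proof -
      have "2 * norm (b - a) \<le> 4 * norm (b - a) * norm (u t)"
        using mult_left_mono[OF n2, of "4 * norm (b - a)"] by simp
      then show ?thesis using n2 by (simp add: divide_le_eq)
    qed
    finally show "norm (vector_derivative (\<lambda>t. inverse (norm (a + t *\<^sub>R (b - a))) *\<^sub>R (a + t *\<^sub>R (b - a))) (at t)) \<le> 4 * norm (b - a)"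
      using vd unfolding u_def by simp
  qed
qed

lemma conf_dist_le:
  assumes "valid_path \<gamma>" "path_image \<gamma> \<subseteq> \<Omega>" "pathstart \<gamma> = x" "pathfinish \<gamma> = y"
    and B: "\<forall>t\<in>{0..1}. exp (\<rho> (\<gamma> t)) * norm (vector_derivative \<gamma> (at t)) \<le> B"
  shows "conf_dist \<Omega> \<rho> x y \<le> B"
proof -
  have B0: "0 \<le> B" using B[rule_format, of 0] by (smt (verit) atLeastAtMost_iff exp_gt_zero mult_nonneg_nonneg norm_ge_zero)
  have len: "conf_length \<rho> \<gamma> \<le> B"
  proof (cases "(\<lambda>t. exp (\<rho> (\<gamma> t)) * norm (vector_derivative \<gamma> (at t))) integrable_on {0..1}")
    case True
    have "integral {0..1} (\<lambda>t. exp (\<rho> (\<gamma> t)) * norm (vector_derivative \<gamma> (at t))) \<le> integral {0..1::real} (\<lambda>t. B)"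
      by (rule integral_le[OF True]) (use B in auto)
    then show ?thesis unfolding conf_length_def by simp
  next
    case False
    then show ?thesis unfolding conf_length_def using B0 by (simp add: not_integrable_integral)
  qed
  have nn: "0 \<le> conf_length \<rho> g" for g :: "real \<Rightarrow> 'a"
    unfolding conf_length_def
    by (cases "(\<lambda>t. exp (\<rho> (g t)) * norm (vector_derivative g (at t))) integrable_on {0..1}")
       (auto intro!: integral_nonneg simp: not_integrable_integral)
  show ?thesis unfolding conf_dist_def
    apply (rule cInf_lower2[OF _ len])
    using assms(1-4) apply blast
    using nn by (auto intro!: bdd_belowI[where m=0])
qed

lemma normalize_cap:
  fixes y p :: "'a::euclidean_space"
  assumes "norm y \<le> 1" "y \<bullet> p > c" "c > 0"
  shows "(inverse (norm y) *\<^sub>R y) \<bullet> p > c" "y \<noteq> 0" "norm (inverse (norm y) *\<^sub>R y) = 1"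
proof -
  show yz: "y \<noteq> 0" using assms by auto
  then have ny: "norm y > 0" by simp
  have "y \<bullet> p \<le> (y \<bullet> p) / norm y"
    using assms ny by (simp add: le_divide_eq mult_left_le)
  moreover have "(inverse (norm y) *\<^sub>R y) \<bullet> p = (y \<bullet> p) / norm y" by (simp add: divide_inverse mult.commute)
  ultimately show "(inverse (norm y) *\<^sub>R y) \<bullet> p > c" using assms by linarith
  show "norm (inverse (norm y) *\<^sub>R y) = 1" using ny by simp
qed

lemma cap_zero:
  fixes \<Omega> :: "'a::euclidean_space set" and \<rho> :: "'a \<Rightarrow> real" and s :: "'a \<Rightarrow> real"
  assumes complete: "conf_complete \<Omega> \<rho>"
    and cs: "continuous_on (closure \<Omega>) s" and seq: "\<forall>x\<in>\<Omega>. s x = exp (- \<rho> x)"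
    and p: "norm p = 1" and q: "norm q = 1" and c0: "0 < q \<bullet> p" and c1: "q \<bullet> p < 1"
    and cap: "\<And>y. norm y = 1 \<Longrightarrow> y \<bullet> p > q \<bullet> p \<Longrightarrow> y \<in> \<Omega>"
    and qn: "q \<notin> \<Omega>"
  shows "s q = 0" "q \<in> closure \<Omega>"
proof -
  define c where "c = q \<bullet> p"
  define t where "t = (\<lambda>n. inverse (real (Suc n)))"
  define w where "w = (\<lambda>n. (1 - t n) *\<^sub>R q + t n *\<^sub>R p)"
  define X where "X = (\<lambda>n. inverse (norm (w n)) *\<^sub>R w n)"
  have t01: "0 < t n" "t n \<le> 1" for n unfolding t_def by (auto simp: field_simps)
  have t0: "t \<longlonglongrightarrow> 0" unfolding t_def by (rule LIMSEQ_inverse_real_of_nat)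
  have wq: "w \<longlonglongrightarrow> q"
  proof -
    have "w \<longlonglongrightarrow> (1 - 0) *\<^sub>R q + 0 *\<^sub>R p" unfolding w_def by (intro tendsto_intros t0)
    then show ?thesis by simp
  qed
  have wn: "norm (w n) \<le> 1" for n
  proof -
    have "norm (w n) \<le> norm ((1 - t n) *\<^sub>R q) + norm (t n *\<^sub>R p)" unfolding w_def by (rule norm_triangle_ineq)
    also have "\<dots> = 1" using t01[of n] p q by simp
    finally show ?thesis .
  qed
  have wp: "w n \<bullet> p > c" for n
  proof -
    have "w n \<bullet> p = (1 - t n) * c + t n" unfolding w_def c_def using p
      by (simp add: inner_add_left dot_square_norm)
    moreover have "t n * (1 - c) > 0" using t01[of n] c1 unfolding c_def by simp
    ultimately show ?thesis by (simp add: algebra_simps)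
  qed
  have Xp: "X n \<bullet> p > c" "norm (X n) = 1" for n
    using normalize_cap[OF wn wp, of n] c0 unfolding X_def c_def by auto
  have XO: "X n \<in> \<Omega>" for n using cap Xp unfolding c_def by auto
  have Xq: "X \<longlonglongrightarrow> q"
  proof -
    have "(\<lambda>n. norm (w n)) \<longlonglongrightarrow> 1" using tendsto_norm[OF wq] q by simp
    then have "(\<lambda>n. inverse (norm (w n))) \<longlonglongrightarrow> 1" using tendsto_inverse[of "\<lambda>n. norm (w n)" 1] by simp
    from tendsto_scaleR[OF this wq] show ?thesis unfolding X_def by simp
  qed
  have qcl: "q \<in> closure \<Omega>" unfolding closure_sequential using XO Xq by blast
  have sX: "(\<lambda>n. s (X n)) \<longlonglongrightarrow> s q"
  proof -
    have "\<forall>\<^sub>F n in sequentially. X n \<in> closure \<Omega>" using XO closure_subset by (auto intro!: always_eventually)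
    then show ?thesis using continuous_on_tendsto_compose[OF cs Xq qcl] by (simp add: o_def)
  qed
  have sq0: "s q \<ge> 0"
    by (rule tendsto_lowerbound[OF sX]) (use XO seq in \<open>auto intro: less_imp_le\<close>)
  show "s q = 0"
  proof (rule ccontr)
    assume "s q \<noteq> 0"
    with sq0 have a: "s q > 0" by simp
    define M where "M = 2 / s q"
    have M0: "M > 0" using a by (simp add: M_def)
    obtain \<delta> where d0: "\<delta> > 0" and dd: "\<And>y. y \<in> closure \<Omega> \<Longrightarrow> dist y q < \<delta> \<Longrightarrow> dist (s y) (s q) < s q / 2"
    proof -
      have "\<exists>d>0. \<forall>y\<in>closure \<Omega>. dist y q < d \<longrightarrow> dist (s y) (s q) < s q / 2"
        using cs qcl a half_gt_zero[OF a] unfolding continuous_on_iff by blast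
      then show ?thesis using that by blast
    qed
    have expM: "exp (\<rho> y) < M" if "y \<in> \<Omega>" "dist y q < \<delta>" for y
    proof -
      have "y \<in> closure \<Omega>" using that(1) closure_subset by blast
      then have "dist (s y) (s q) < s q / 2" using dd that(2) by blast
      then have "s y > s q / 2" unfolding dist_real_def by linarith
      then have "exp (- \<rho> y) > s q / 2" using seq that by auto
      then have "exp (\<rho> y) * (s q / 2) < exp (\<rho> y) * exp (- \<rho> y)" by simp
      also have "\<dots> = 1" by (simp add: exp_minus)
      finally show ?thesis unfolding M_def using a by (simp add: field_simps)
    qed
    define \<eta> where "\<eta> = min (\<delta>/2) (1/4)"
    have eta0: "\<eta> > 0" using d0 by (simp add: \<eta>_def)
    have chordbound: "conf_dist \<Omega> \<rho> a b \<le> M * (4 * norm (b - a))"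
      if ab: "a \<in> range X" "b \<in> range X" "dist a q < \<eta>" "dist b q < \<eta>" for a b
    proof -
      define u where "u = (\<lambda>t::real. a + t *\<^sub>R (b - a))"
      have an: "norm a = 1" "a \<bullet> p > c" and bn: "norm b = 1" "b \<bullet> p > c" using ab(1,2) Xp by auto
      have uq: "norm (u t - q) < \<eta>" if "t \<in> {0..1}" for t
      proof -
        have "u t - q = (1 - t) *\<^sub>R (a - q) + t *\<^sub>R (b - q)" unfolding u_def by (simp add: algebra_simps)
        then have "norm (u t - q) \<le> (1 - t) * norm (a - q) + t * norm (b - q)"
          using that by (auto intro!: order_trans[OF norm_triangle_ineq])
        also have "\<dots> < \<eta>" using that ab(3,4) unfolding dist_norm
          by (intro convex_bound_lt) auto
        finally show ?thesis .
      qed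
      have un: "norm (u t) \<ge> 1/2" "norm (u t) \<le> 1" "u t \<bullet> p > c" if "t \<in> {0..1}" for t
      proof -
        have "norm q - norm (u t) \<le> norm (u t - q)" by (metis norm_minus_commute norm_triangle_ineq2)
        then show "norm (u t) \<ge> 1/2" using uq[OF that] q unfolding \<eta>_def by linarith
        have "u t = (1 - t) *\<^sub>R a + t *\<^sub>R b" unfolding u_def by (simp add: algebra_simps)
        have t0: "0 \<le> t" "t \<le> 1" using that by auto
        have "norm (u t) \<le> norm ((1 - t) *\<^sub>R a) + norm (t *\<^sub>R b)"
          unfolding \<open>u t = _\<close> by (rule norm_triangle_ineq)
        also have "\<dots> = 1" using t0 an bn by simp
        finally show "norm (u t) \<le> 1" .
        define m where "m = min (a \<bullet> p) (b \<bullet> p)"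
        have "(1 - t) * (a \<bullet> p) \<ge> (1 - t) * m" "t * (b \<bullet> p) \<ge> t * m"
          using t0 unfolding m_def by (auto intro!: mult_left_mono)
        moreover have "u t \<bullet> p = (1 - t) * (a \<bullet> p) + t * (b \<bullet> p)"
          unfolding \<open>u t = _\<close> by (simp add: inner_add_left)
        moreover have "m > c" using an bn unfolding m_def by simp
        ultimately show "u t \<bullet> p > c" by (simp add: algebra_simps)
      qed
      define \<gamma> where "\<gamma> = (\<lambda>t. inverse (norm (a + t *\<^sub>R (b - a))) *\<^sub>R (a + t *\<^sub>R (b - a)))"
      have ch: "valid_path \<gamma>" "\<forall>t\<in>{0..1}. norm (vector_derivative \<gamma> (at t)) \<le> 4 * norm (b - a)"
        using chord[of a b] un(1) unfolding u_def \<gamma>_def by auto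
      have gO: "\<gamma> t \<in> \<Omega>" and gq: "dist (\<gamma> t) q < \<delta>" if "t \<in> {0..1}" for t
      proof -
        have g: "\<gamma> t = inverse (norm (u t)) *\<^sub>R u t" unfolding \<gamma>_def u_def by simp
        show "\<gamma> t \<in> \<Omega>" unfolding g using normalize_cap[OF un(2,3)[OF that]] c0 cap unfolding c_def by auto
        have "norm (\<gamma> t - u t) = \<bar>1 - norm (u t)\<bar>"
        proof -
          have "\<gamma> t - u t = (inverse (norm (u t)) - 1) *\<^sub>R u t" unfolding g by (simp add: algebra_simps)
          then have "norm (\<gamma> t - u t) = \<bar>inverse (norm (u t)) - 1\<bar> * norm (u t)" by simp
          also have "\<dots> = \<bar>(inverse (norm (u t)) - 1) * norm (u t)\<bar>" by (simp add: abs_mult)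
          also have "(inverse (norm (u t)) - 1) * norm (u t) = 1 - norm (u t)"
          proof -
            have "norm (u t) \<noteq> 0" using un(1)[OF that] by linarith
            then show ?thesis by (simp add: field_simps)
          qed
          finally show ?thesis .
        qed
        also have "\<dots> \<le> norm (u t - q)" using q norm_triangle_ineq3[of "u t" q] by simp
        finally have "norm (\<gamma> t - q) < 2 * \<eta>"
          using uq[OF that] norm_triangle_ineq[of "\<gamma> t - u t" "u t - q"] by simp
        then show "dist (\<gamma> t) q < \<delta>" unfolding dist_norm \<eta>_def by simp
      qed
      show ?thesis
      proof (rule conf_dist_le[OF ch(1)])
        show "path_image \<gamma> \<subseteq> \<Omega>" unfolding path_image_def using gO by auto
        show "pathstart \<gamma> = a" unfolding pathstart_def \<gamma>_def using an by simp
        show "pathfinish \<gamma> = b" unfolding pathfinish_def \<gamma>_def using bn by simp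
        show "\<forall>t\<in>{0..1}. exp (\<rho> (\<gamma> t)) * norm (vector_derivative \<gamma> (at t)) \<le> M * (4 * norm (b - a))"
        proof
          fix t :: real assume t: "t \<in> {0..1}"
          show "exp (\<rho> (\<gamma> t)) * norm (vector_derivative \<gamma> (at t)) \<le> M * (4 * norm (b - a))"
            using mult_mono[OF less_imp_le[OF expM[OF gO[OF t] gq[OF t]]] ch(2)[rule_format, OF t]] M0 by simp
        qed
      qed
    qed
    have "\<exists>x\<in>\<Omega>. X \<longlonglongrightarrow> x"
      using complete[unfolded conf_complete_def, rule_format]
    proof -
      have cau: "Cauchy X" using Xq by (rule LIMSEQ_imp_Cauchy)
      have "\<exists>N. \<forall>m\<ge>N. \<forall>n\<ge>N. conf_dist \<Omega> \<rho> (X m) (X n) < e" if e: "e > 0" for e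
      proof -
        obtain N1 where N1: "\<And>n. n \<ge> N1 \<Longrightarrow> dist (X n) q < \<eta>"
          using Xq eta0 unfolding lim_sequentially by blast
        obtain N2 where N2: "\<And>m n. m \<ge> N2 \<Longrightarrow> n \<ge> N2 \<Longrightarrow> dist (X m) (X n) < e / (4 * M)"
          using cau e M0 unfolding Cauchy_def by (metis divide_pos_pos mult_pos_pos zero_less_numeral)
        show ?thesis
        proof (intro exI allI impI)
          fix m n assume "max N1 N2 \<le> m" "max N1 N2 \<le> n"
          then have mn: "m \<ge> N1" "n \<ge> N1" "m \<ge> N2" "n \<ge> N2" by auto
          have "conf_dist \<Omega> \<rho> (X m) (X n) \<le> M * (4 * norm (X n - X m))"
            by (rule chordbound) (use N1 mn in auto)
          also have "\<dots> < e"
          proof -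
            have h: "norm (X n - X m) < e / (4 * M)" using N2[OF mn(3,4)] by (simp add: dist_norm norm_minus_commute)
            have "norm (X n - X m) * (4 * M) < e" using h M0 by (simp add: pos_less_divide_eq)
            moreover have "M * (4 * norm (X n - X m)) = norm (X n - X m) * (4 * M)" by simp
            ultimately show ?thesis by linarith
          qed
          finally show "conf_dist \<Omega> \<rho> (X m) (X n) < e" .
        qed
      qed
      then show ?thesis using complete[unfolded conf_complete_def, rule_format, of X] XO by blast
    qed
    then obtain x where "x \<in> \<Omega>" "X \<longlonglongrightarrow> x" by blast
    with LIMSEQ_unique[OF Xq] qn show False by blast
  qed
  show "q \<in> closure \<Omega>" by (rule qcl)
qed

lemma sq_dist_sphere:
  fixes y p :: "'a::euclidean_space"
  assumes "norm y = 1" "norm p = 1"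
  shows "(dist p y)\<^sup>2 = 2 - 2 * (y \<bullet> p)"
proof -
  have "(dist p y)\<^sup>2 = (p - y) \<bullet> (p - y)" by (simp add: dist_norm dot_square_norm)
  also have "\<dots> = p \<bullet> p + y \<bullet> y - 2 * (y \<bullet> p)" by (simp add: inner_diff_left inner_diff_right inner_commute)
  also have "\<dots> = 2 - 2 * (y \<bullet> p)" using assms by (simp add: dot_square_norm)
  finally show ?thesis .
qed

lemma boundary_zero:
  fixes \<Omega> :: "'a::euclidean_space set" and \<rho> :: "'a \<Rightarrow> real" and s :: "'a \<Rightarrow> real"
  assumes sub: "\<Omega> \<subseteq> sphere 0 1" and op: "openin (top_of_set (sphere 0 1)) \<Omega>"
    and complete: "conf_complete \<Omega> \<rho>"
    and cs: "continuous_on (closure \<Omega>) s" and seq: "\<forall>x\<in>\<Omega>. s x = exp (- \<rho> x)"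
    and x: "x \<in> closure \<Omega>" "x \<notin> \<Omega>"
  shows "s x = 0"
proof -
  have clsub: "closure \<Omega> \<subseteq> sphere 0 1" using sub by (simp add: closure_minimal)
  define F where "F = sphere 0 1 - \<Omega>"
  have Fc: "closed F"
  proof -
    have "closedin (top_of_set (sphere 0 1)) F" unfolding F_def using op unfolding openin_closedin_eq by simp
    then show ?thesis using closedin_closed_trans closed_sphere by blast
  qed
  have xF: "x \<in> F" unfolding F_def using x clsub by auto
  have H: "\<bar>s x\<bar> < e" if e: "e > 0" for e
  proof -
    obtain d where d0: "d > 0" and dd: "\<And>y. y \<in> closure \<Omega> \<Longrightarrow> dist y x < d \<Longrightarrow> dist (s y) (s x) < e"
    proof -
      have "\<exists>d>0. \<forall>y\<in>closure \<Omega>. dist y x < d \<longrightarrow> dist (s y) (s x) < e"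
        using cs x(1) e unfolding continuous_on_iff by blast
      then show ?thesis using that by blast
    qed
    obtain p where pO: "p \<in> \<Omega>" and px: "dist p x < min (d/2) (1/4)"
    proof -
      have "min (d/2) (1/4) > 0" using d0 by simp
      then show ?thesis using x(1) that unfolding closure_approachable by blast
    qed
    obtain q where qF: "q \<in> F" and qmin: "\<And>y. y \<in> F \<Longrightarrow> dist p q \<le> dist p y"
      using distance_attains_inf[OF Fc, of p] xF by blast
    have pn: "norm p = 1" using pO sub by auto
    have qn: "norm q = 1" "q \<notin> \<Omega>" using qF unfolding F_def by auto
    have r1: "dist p q < 1/4" using qmin[OF xF] px by linarith
    have r0: "dist p q > 0" using pO qn(2) by auto
    have qx: "dist q x < d" using px r1 qmin[OF xF] dist_triangle[of q x p] by (simp add: dist_commute)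
    have qp: "(dist p q)\<^sup>2 = 2 - 2 * (q \<bullet> p)" by (rule sq_dist_sphere[OF qn(1) pn])
    have "dist p q * dist p q < 1 * 1" by (rule mult_strict_mono) (use r0 r1 in auto)
    then have sq: "(dist p q)\<^sup>2 < 1" by (simp add: power2_eq_square)
    have sq0: "(dist p q)\<^sup>2 > 0" using r0 by simp
    have c0: "0 < q \<bullet> p" using qp sq by linarith
    have c1: "q \<bullet> p < 1" using qp sq0 by linarith
    have capH: "y \<in> \<Omega>" if y: "norm y = 1" "q \<bullet> p < y \<bullet> p" for y
    proof -
      have "(dist p y)\<^sup>2 < (dist p q)\<^sup>2" using sq_dist_sphere[OF y(1) pn] qp y(2) by linarith
      then have "dist p y < dist p q" by (simp add: power_less_imp_less_base)
      then have "y \<notin> F"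
      proof -
        assume lt: "dist p y < dist p q"
        show "y \<notin> F"
        proof
          assume "y \<in> F"
          then have "dist p q \<le> dist p y" by (rule qmin)
          with lt show False by linarith
        qed
      qed
      then show "y \<in> \<Omega>" using y(1) unfolding F_def by auto
    qed
    note res = cap_zero[OF complete cs seq pn qn(1) c0 c1 capH qn(2)]
    show ?thesis using dd[OF res(2) qx] res(1) by (simp add: dist_real_def)
  qed
  show ?thesis
  proof (rule ccontr)
    assume "s x \<noteq> 0"
    then have "\<bar>s x\<bar> > 0" by simp
    from H[OF this] show False by simp
  qed
qed

theorem mainTheorem3:
  fixes \<Omega> :: "'a::euclidean_space set" and \<rho> :: "'a \<Rightarrow> real"
  assumes "\<Omega> \<subseteq> sphere 0 1" and "\<Omega> \<noteq> sphere 0 1"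
    and "openin (top_of_set (sphere 0 1)) \<Omega>" and "connected \<Omega>" and "\<Omega> \<noteq> {}"
    and "sphere_C1 \<Omega> \<rho>"
    and "conf_complete \<Omega> \<rho>"
    and "\<exists>s. continuous_on (closure \<Omega>) s \<and> (\<forall>x\<in>\<Omega>. s x = exp (- \<rho> x))"
  shows "\<forall>K. K \<subseteq> hyperbolic_space \<and> compact K
           \<longrightarrow> compact {x \<in> \<Omega>. assoc_map \<Omega> \<rho> x \<in> K}"
proof (intro allI impI)
  fix K :: "(real \<times> 'a) set" assume K: "K \<subseteq> hyperbolic_space \<and> compact K"
  obtain s where cs: "continuous_on (closure \<Omega>) s" and seq: "\<forall>x\<in>\<Omega>. s x = exp (- \<rho> x)"
    using assms(8) by blast
  have C1: "\<forall>x\<in>\<Omega>. \<exists>v. v \<bullet> x = 0 \<and> (\<rho> has_derivative (\<lambda>h. v \<bullet> h)) (at x within \<Omega>)"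
    and cg: "continuous_on \<Omega> (sgrad \<Omega> \<rho>)" using assms(6) unfolding sphere_C1_def by auto
  have crho: "continuous_on \<Omega> \<rho>"
    unfolding continuous_on_eq_continuous_within using C1 has_derivative_continuous by blast
  have cphi: "continuous_on \<Omega> (assoc_map \<Omega> \<rho>)"
    unfolding assoc_map_def Let_def using crho cg
    by (intro continuous_intros) auto
  obtain B where B0: "B > 0" and BK: "\<And>k. k \<in> K \<Longrightarrow> norm k \<le> B"
    using compact_imp_bounded[of K] K unfolding bounded_pos by blast
  have Kc: "closed K" using K compact_imp_closed by blast
  have fstb: "exp (\<rho> y) / 2 \<le> fst (assoc_map \<Omega> \<rho> y)" for y
  proof -
    have "0 \<le> exp (-2 * \<rho> y) * (1 + (norm (sgrad \<Omega> \<rho> y))\<^sup>2)" by simp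
    then have "exp (\<rho> y) / 2 * 1 \<le> exp (\<rho> y) / 2 * (1 + exp (-2 * \<rho> y) * (1 + (norm (sgrad \<Omega> \<rho> y))\<^sup>2))"
      by (intro mult_left_mono) auto
    then show ?thesis unfolding assoc_map_def Let_def by simp
  qed
  have lowb: "s y \<ge> 1 / (2 * B)" if y: "y \<in> \<Omega>" "assoc_map \<Omega> \<rho> y \<in> K" for y
  proof -
    have "fst (assoc_map \<Omega> \<rho> y) \<le> norm (assoc_map \<Omega> \<rho> y)"
      by (metis norm_fst_le prod.collapse real_norm_def abs_ge_self order_trans)
    then have "exp (\<rho> y) / 2 \<le> B" using fstb[of y] BK[OF y(2)] by linarith
    then have "exp (\<rho> y) \<le> 2 * B" by simp
    then have "1 / (2 * B) \<le> 1 / exp (\<rho> y)" using B0 by (intro divide_left_mono) auto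
    then show ?thesis using seq y(1) by (simp add: exp_minus inverse_eq_divide)
  qed
  show "compact {x \<in> \<Omega>. assoc_map \<Omega> \<rho> x \<in> K}"
    unfolding compact_eq_seq_compact_metric seq_compact_def
  proof (intro allI impI)
    fix f :: "nat \<Rightarrow> 'a" assume f: "\<forall>n. f n \<in> {x \<in> \<Omega>. assoc_map \<Omega> \<rho> x \<in> K}"
    have fs: "\<forall>n. f n \<in> sphere 0 1" using f assms(1) by auto
    obtain l r where l: "l \<in> sphere 0 1" and r: "strict_mono r" and lim: "(f \<circ> r) \<longlonglongrightarrow> l"
      using compact_sphere[of "0::'a" 1] fs unfolding compact_eq_seq_compact_metric seq_compact_def by meson
    have fr: "(f \<circ> r) n \<in> \<Omega>" "assoc_map \<Omega> \<rho> ((f \<circ> r) n) \<in> K" for n using f by auto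
    have lcl: "l \<in> closure \<Omega>" unfolding closure_sequential using fr(1) lim by blast
    have lO: "l \<in> \<Omega>"
    proof (rule ccontr)
      assume "l \<notin> \<Omega>"
      then have sl: "s l = 0" using boundary_zero[OF assms(1,3,7) cs seq lcl] by blast
      have "\<forall>\<^sub>F n in sequentially. (f \<circ> r) n \<in> closure \<Omega>" using fr(1) closure_subset by (auto intro!: always_eventually)
      then have "(\<lambda>n. s ((f \<circ> r) n)) \<longlonglongrightarrow> s l"
        using continuous_on_tendsto_compose[OF cs lim lcl] by (simp add: o_def)
      moreover have "\<forall>\<^sub>F n in sequentially. 1 / (2 * B) \<le> s ((f \<circ> r) n)"
        using lowb fr by (auto intro!: always_eventually)
      ultimately have "1 / (2 * B) \<le> s l" by (rule tendsto_lowerbound) simp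
      then show False using sl B0 by simp
    qed
    have "(\<lambda>n. assoc_map \<Omega> \<rho> ((f \<circ> r) n)) \<longlonglongrightarrow> assoc_map \<Omega> \<rho> l"
      using continuous_on_tendsto_compose[OF cphi lim lO] fr(1) by (simp add: o_def)
    then have "assoc_map \<Omega> \<rho> l \<in> K" by (rule closed_sequentially[OF Kc, of "\<lambda>n. assoc_map \<Omega> \<rho> ((f \<circ> r) n)", OF fr(2)])
    then show "\<exists>l\<in>{x \<in> \<Omega>. assoc_map \<Omega> \<rho> x \<in> K}. \<exists>r. strict_mono r \<and> (f \<circ> r) \<longlonglongrightarrow> l"
      using lO r lim by blast
  qed
qed

end
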